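(* Consider the infinite hydrodynamic chain $\partial_{t_2}u^i=\sum_{j\in\mathbb{Z}}A^i_j(\mathbf{u})\,\partial_xu^j$, $\mathbf{u}=(u^\ell)_{\ell\in\mathbb{Z}}$, given explicitly by (with $\partial=\partial_x$) $$\partial_{t_2}u^{-k}=\big(k\,u^{-(k+1)}-(k-2)u^{-(k-1)}+u^{-k}u^1\big)\partial u^0+u^0u^{-k}\partial u^1+u^0\big(\partial u^{-(k-1)}+\partial u^{-(k+1)}\big),\quad k>2,$$ $$\partial_{t_2}u^{-2}=\big(u^{-2}u^1+2u^{-3}\big)\partial u^0+u^0u^{-2}\partial u^1+u^0\partial u^{-3}+2u^0\partial u^{-1},$$ $$\partial_{t_2}u^{-1}=\big(u^{-1}u^1+u^{-2}\big)\partial u^0+u^0u^{-1}\partial u^1+u^0\partial u^{-2},$$ $$\partial_{t_2}u^0=u^0u^1\partial u^0+(u^0)^2\partial u^1,$$ $$\partial_{t_2}u^1=\big(2u^2-(u^1)^2\big)\partial u^0-u^0u^1\partial u^1+u^0\partial u^2,$$ $$\partial_{t_2}u^k=\big((k+1)u^{k+1}-(k-1)u^{k-1}-u^ku^1\big)\partial u^0-u^0u^k\partial u^1+u^0\big(\partial u^{k+1}+\partial u^{k-1}\big),\quad k>1.$$ Then the Haantjes tensor of the matrix $A(\mathbf{u})$ vanishes identically.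
   Context: For an infinite matrix $K(\mathbf{v})=(K^i_j(\mathbf{v}))_{i,j\in\mathbb{Z}}$ each of whose rows has finitely many nonzero entries, each depending on finitely many $v^\ell$, the Nijenhuis tensor is $\mathcal N^i_{jk}=K^p_j\partial_pK^i_k-K^p_k\partial_pK^i_j-K^i_p(\partial_jK^p_k-\partial_kK^p_j)$ and the Haantjes tensor is $\mathcal H^i_{jk}=\mathcal N^i_{pr}K^p_jK^r_k-\mathcal N^p_{jr}K^i_pK^r_k-\mathcal N^p_{rk}K^i_pK^r_j+\mathcal N^p_{jk}K^i_rK^r_p$, where $\partial_\ell=\partial/\partial v^\ell$ and repeated indices are summed. *)

theory Defs
  imports "HOL-Analysis.Analysis"
begin

type_synonym point = "int \<Rightarrow> real"
text \<open>Infinite matrices depending on the point: K v i j = K^i_j(v).\<close>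
type_synonym imatrix = "point \<Rightarrow> int \<Rightarrow> int \<Rightarrow> real"

text \<open>Sum over Z of a finitely supported family (all sums in the tensors are finite).\<close>
definition zsum :: "(int \<Rightarrow> real) \<Rightarrow> real" where
  "zsum f = sum f {p. f p \<noteq> 0}"

definition pd :: "int \<Rightarrow> (point \<Rightarrow> real) \<Rightarrow> point \<Rightarrow> real" where
  "pd l F v = deriv (\<lambda>t. F (v(l := t))) (v l)"

definition nijenhuis :: "imatrix \<Rightarrow> point \<Rightarrow> int \<Rightarrow> int \<Rightarrow> int \<Rightarrow> real" where
  "nijenhuis K v i j k =
     zsum (\<lambda>p. K v p j * pd p (\<lambda>w. K w i k) v)
   - zsum (\<lambda>p. K v p k * pd p (\<lambda>w. K w i j) v)
   - zsum (\<lambda>p. K v i p * (pd j (\<lambda>w. K w p k) v - pd k (\<lambda>w. K w p j) v))"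

definition haantjes :: "imatrix \<Rightarrow> point \<Rightarrow> int \<Rightarrow> int \<Rightarrow> int \<Rightarrow> real" where
  "haantjes K v i j k =
     zsum (\<lambda>p. zsum (\<lambda>r. nijenhuis K v i p r * K v p j * K v r k))
   - zsum (\<lambda>p. zsum (\<lambda>r. nijenhuis K v p j r * K v i p * K v r k))
   - zsum (\<lambda>p. zsum (\<lambda>r. nijenhuis K v p r k * K v i p * K v r j))
   + zsum (\<lambda>p. zsum (\<lambda>r. nijenhuis K v p j k * K v i r * K v r p))"

text \<open>The matrix A(u) of the hydrodynamic chain: A u i j is the coefficient of
  \<partial>u^j in the equation for \<partial>_{t_2} u^i.\<close>
definition chainA :: imatrix where
  "chainA u i j =
    (if i < -2 then
        (if j = 0 then real_of_int (-i) * u (i - 1) - real_of_int (-i - 2) * u (i + 1) + u i * u 1 else 0)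
      + (if j = 1 then u 0 * u i else 0)
      + (if j = i + 1 then u 0 else 0)
      + (if j = i - 1 then u 0 else 0)
     else if i = -2 then
        (if j = 0 then u (-2) * u 1 + 2 * u (-3) else 0)
      + (if j = 1 then u 0 * u (-2) else 0)
      + (if j = -3 then u 0 else 0)
      + (if j = -1 then 2 * u 0 else 0)
     else if i = -1 then
        (if j = 0 then u (-1) * u 1 + u (-2) else 0)
      + (if j = 1 then u 0 * u (-1) else 0)
      + (if j = -2 then u 0 else 0)
     else if i = 0 then
        (if j = 0 then u 0 * u 1 else 0)
      + (if j = 1 then (u 0)^2 else 0)
     else if i = 1 then
        (if j = 0 then 2 * u 2 - (u 1)^2 else 0)
      + (if j = 1 then - (u 0 * u 1) else 0)
      + (if j = 2 then u 0 else 0)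
     else
        (if j = 0 then real_of_int (i + 1) * u (i + 1) - real_of_int (i - 1) * u (i - 1) - u i * u 1 else 0)
      + (if j = 1 then - (u 0 * u i) else 0)
      + (if j = i + 1 then u 0 else 0)
      + (if j = i - 1 then u 0 else 0))"

end

theory Submission
  imports Defs
begin

definition ee :: "int \<Rightarrow> int \<Rightarrow> real" where "ee l m = (if l = m then 1 else 0)"

definition dA :: "point \<Rightarrow> int \<Rightarrow> int \<Rightarrow> int \<Rightarrow> real" where
"dA u i j l =
 (if i < -2 then
   (if j = 0 then of_int (-i) * ee l (i-1) - of_int(-i-2) * ee l (i+1) + (ee l i * u 1 + u i * ee l 1) else 0)
 + (if j = 1 then ee l 0 * u i + u 0 * ee l i else 0)
 + (if j = i+1 then ee l 0 else 0) + (if j = i-1 then ee l 0 else 0)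
 else if i = -2 then
   (if j = 0 then ee l (-2) * u 1 + u(-2)*ee l 1 + 2 * ee l (-3) else 0)
 + (if j = 1 then ee l 0 * u(-2) + u 0 * ee l (-2) else 0)
 + (if j = -3 then ee l 0 else 0) + (if j = -1 then 2 * ee l 0 else 0)
 else if i = -1 then
   (if j = 0 then ee l (-1) * u 1 + u (-1) * ee l 1 + ee l (-2) else 0)
 + (if j = 1 then ee l 0 * u(-1) + u 0 * ee l (-1) else 0)
 + (if j = -2 then ee l 0 else 0)
 else if i = 0 then
   (if j = 0 then ee l 0 * u 1 + u 0 * ee l 1 else 0)
 + (if j = 1 then 2 * u 0 * ee l 0 else 0)
 else if i = 1 then
   (if j = 0 then 2 * ee l 2 - 2 * u 1 * ee l 1 else 0)
 + (if j = 1 then -(ee l 0 * u 1 + u 0 * ee l 1) else 0)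
 + (if j = 2 then ee l 0 else 0)
 else
   (if j = 0 then of_int (i+1) * ee l (i+1) - of_int (i-1) * ee l (i-1) - (ee l i * u 1 + u i * ee l 1) else 0)
 + (if j = 1 then -(ee l 0 * u i + u 0 * ee l i) else 0)
 + (if j = i+1 then ee l 0 else 0) + (if j = i-1 then ee l 0 else 0))"

lemma DERIV_if':
  "(P \<Longrightarrow> (f has_field_derivative a) F) \<Longrightarrow> (\<not>P \<Longrightarrow> (g has_field_derivative b) F)
   \<Longrightarrow> c = (if P then a else b) \<Longrightarrow> ((\<lambda>t. if P then f t else g t) has_field_derivative c) F"
  by (cases P) auto

lemma DERIV_coord: "c = ee l m \<Longrightarrow> ((\<lambda>t. (v(l:=t)) m) has_field_derivative c) (at x)"
  by (cases "m = l") (auto simp: ee_def intro!: derivative_eq_intros)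

lemma DERIV_chainA: "((\<lambda>t. chainA (v(l:=t)) i j) has_field_derivative dA v i j l) (at (v l))"
  unfolding chainA_def
  apply (rule DERIV_if' | rule derivative_eq_intros | rule DERIV_coord | rule refl)+
  apply (auto simp: dA_def ee_def)
  done

lemma pd_chainA: "pd l (\<lambda>w. chainA w i j) v = dA v i j l"
  unfolding pd_def by (rule DERIV_imp_deriv[OF DERIV_chainA])

lemma zsum_eq: "finite S \<Longrightarrow> (\<And>p. p \<notin> S \<Longrightarrow> f p = 0) \<Longrightarrow> zsum f = sum f S"
  unfolding zsum_def by (rule sum.mono_neutral_left) auto

lemma zsum_expand:
  assumes "finite C" "\<And>p. p \<notin> C \<Longrightarrow> p \<notin> {i-1,i,i+1} \<Longrightarrow> f p = 0"
  shows "zsum f = sum f C + ((if i-1 \<in> C then 0 else f (i-1)) + (if i \<in> C then 0 else f i)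
           + (if i+1 \<in> C then 0 else f (i+1)))"
proof -
  have "zsum f = sum f (C \<union> ({i-1,i,i+1} - C))"
    by (rule zsum_eq) (use assms in auto)
  also have "\<dots> = sum f C + sum f ({i-1,i,i+1} - C)"
    by (rule sum.union_disjoint) (use assms in auto)
  also have "sum f ({i-1,i,i+1} - C) = sum (\<lambda>q. if q \<in> C then 0 else f q) {i-1,i,i+1}"
    by (rule sum.mono_neutral_cong_left) auto
  also have "\<dots> = (if i-1 \<in> C then 0 else f (i-1)) + (if i \<in> C then 0 else f i)
           + (if i+1 \<in> C then 0 else f (i+1))"
    by simp
  finally show ?thesis by simp
qed

definition CC :: "int set" where "CC = {-3,-2,-1,0,1,2}"

lemma chainA_zero: "p \<notin> CC \<Longrightarrow> p \<notin> {i-1,i,i+1} \<Longrightarrow> chainA v i p = 0"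
  unfolding CC_def chainA_def by simp

lemma dA_zero: assumes "l \<notin> CC" "l \<notin> {i-1,i,i+1}" shows "dA v i j l = 0"
proof -
  have "ee l (i-1) = 0" "ee l i = 0" "ee l (i+1) = 0" "ee l 0 = 0" "ee l 1 = 0" "ee l 2 = 0"
    "ee l (-2) = 0" "ee l (-3) = 0" "ee l (-1) = 0"
    using assms unfolding ee_def CC_def by (simp_all only: insert_iff empty_iff simp_thms if_False de_Morgan_disj)
  then show ?thesis unfolding dA_def
    by (simp only: mult_zero_left mult_zero_right add_0_left add_0_right diff_zero minus_zero if_cancel)
qed

lemma N_expand: "nijenhuis chainA v i j k =
   (sum (\<lambda>p. chainA v p j * dA v i k p) CC + ((if i-1 \<in> CC then 0 else chainA v (i-1) j * dA v i k (i-1))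
      + (if i \<in> CC then 0 else chainA v i j * dA v i k i) + (if i+1 \<in> CC then 0 else chainA v (i+1) j * dA v i k (i+1))))
 - (sum (\<lambda>p. chainA v p k * dA v i j p) CC + ((if i-1 \<in> CC then 0 else chainA v (i-1) k * dA v i j (i-1))
      + (if i \<in> CC then 0 else chainA v i k * dA v i j i) + (if i+1 \<in> CC then 0 else chainA v (i+1) k * dA v i j (i+1))))
 - (sum (\<lambda>p. chainA v i p * (dA v p k j - dA v p j k)) CC
      + ((if i-1 \<in> CC then 0 else chainA v i (i-1) * (dA v (i-1) k j - dA v (i-1) j k))
      + (if i \<in> CC then 0 else chainA v i i * (dA v i k j - dA v i j k))
      + (if i+1 \<in> CC then 0 else chainA v i (i+1) * (dA v (i+1) k j - dA v (i+1) j k))))"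
  unfolding nijenhuis_def pd_chainA
  apply (subst zsum_expand[where C=CC and i=i], simp add: CC_def, simp add: dA_zero)
  apply (subst zsum_expand[where C=CC and i=i], simp add: CC_def, simp add: dA_zero)
  apply (subst zsum_expand[where C=CC and i=i], simp add: CC_def, metis chainA_zero mult_zero_left)
  apply (rule refl)
  done

definition GG :: "(int \<Rightarrow> int \<Rightarrow> real) \<Rightarrow> int \<Rightarrow> int \<Rightarrow> real \<Rightarrow> real \<Rightarrow> real \<Rightarrow> int \<Rightarrow> int \<Rightarrow> int \<Rightarrow> real" where
  "GG K b0 b1 x y z a b c = (if b = b0 then x * K a c + (if a = c then y else 0) else 0)
      + (if b = b1 then z * K a c else 0)"

lemma sum_if_const: "(\<Sum>r\<in>U. if P then f r else 0) = (if P then (\<Sum>r\<in>U. f r) else (0::real))"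
  by (cases P) auto

lemma if_mult0: "(if P then a else 0) * (b::real) = (if P then a * b else 0)"
  "b * (if P then a else 0) = (if P then b * a else 0)" by auto

context
  fixes K :: "int \<Rightarrow> int \<Rightarrow> real" and U :: "int set" and b0 b1 :: int and x y z :: real
  assumes finU: "finite U" and b0U: "b0 \<in> U" and b1U: "b1 \<in> U"
begin

definition "KK a c = (\<Sum>r\<in>U. K a r * K r c)"
definition "KKK a c = (\<Sum>r\<in>U. K a r * KK r c)"

abbreviation "NN a b c \<equiv> GG K b0 b1 x y z a b c - GG K b0 b1 x y z a c b"

lemma T1: "i \<in> U \<Longrightarrow> (\<Sum>p\<in>U. \<Sum>r\<in>U. NN i p r * K p j * K r k) =
   K b0 j * (x * KK i k + y * K i k) + K b1 j * z * KK i k - K b0 k * (x * KK i j + y * K i j) - K b1 k * z * KK i j"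
  unfolding GG_def KK_def
  apply (simp add: algebra_simps if_mult0 sum.distrib sum_subtractf sum_if_const finU b0U b1U sum_distrib_left)
  done

lemma T2: "j \<in> U \<Longrightarrow> (\<Sum>p\<in>U. \<Sum>r\<in>U. NN p j r * K i p * K r k) =
   (if j = b0 then x * KKK i k + y * KK i k else 0) + (if j = b1 then z * KKK i k else 0)
   - K b0 k * (x * KK i j + y * K i j) - K b1 k * z * KK i j"
  unfolding GG_def KKK_def KK_def
  apply (simp add: algebra_simps if_mult0 sum.distrib sum_subtractf sum_if_const finU b0U b1U sum_distrib_left)
  done

lemma T3: "k \<in> U \<Longrightarrow> (\<Sum>p\<in>U. \<Sum>r\<in>U. NN p r k * K i p * K r j) =
   K b0 j * (x * KK i k + y * K i k) + K b1 j * z * KK i k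
   - (if k = b0 then x * KKK i j + y * KK i j else 0) - (if k = b1 then z * KKK i j else 0)"
  unfolding GG_def KKK_def KK_def
  apply (simp add: algebra_simps if_mult0 sum.distrib sum_subtractf sum_if_const finU b0U b1U sum_distrib_left)
  done

lemma T4: "j \<in> U \<Longrightarrow> k \<in> U \<Longrightarrow> (\<Sum>p\<in>U. \<Sum>r\<in>U. NN p j k * K i r * K r p) =
   (if j = b0 then x * KKK i k + y * KK i k else 0) + (if j = b1 then z * KKK i k else 0)
   - (if k = b0 then x * KKK i j + y * KK i j else 0) - (if k = b1 then z * KKK i j else 0)"
  apply (subst sum.swap)
  unfolding GG_def KKK_def KK_def
  apply (simp add: algebra_simps if_mult0 sum.distrib sum_subtractf sum_if_const finU b0U b1U sum_distrib_left)
  done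

lemma Hsum: "i \<in> U \<Longrightarrow> j \<in> U \<Longrightarrow> k \<in> U \<Longrightarrow>
  (\<Sum>p\<in>U. \<Sum>r\<in>U. NN i p r * K p j * K r k) - (\<Sum>p\<in>U. \<Sum>r\<in>U. NN p j r * K i p * K r k)
  - (\<Sum>p\<in>U. \<Sum>r\<in>U. NN p r k * K i p * K r j) + (\<Sum>p\<in>U. \<Sum>r\<in>U. NN p j k * K i r * K r p) = 0"
  apply (simp only: T1 T2 T3 T4)
  done

end

lemma haantjes_abstract:
  fixes Kf :: imatrix and S :: "int \<Rightarrow> int set"
  assumes finS: "\<And>a. finite (S a)" and supp: "\<And>a c. c \<notin> S a \<Longrightarrow> Kf v a c = 0"
  and NF: "\<And>a b c. nijenhuis Kf v a b c = GG (Kf v) ca cb x y z a b c - GG (Kf v) ca cb x y z a c b"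
  shows "haantjes Kf v i j k = 0"
proof -
  define E where "E a = S a \<union> {a, ca, cb}" for a
  define U where "U = E i \<union> (\<Union>p\<in>S i. E p) \<union> {j, k}"
  have finE: "finite (E a)" for a using finS by (simp add: E_def)
  have finU: "finite U" unfolding U_def using finE finS by auto
  have inU: "i \<in> U" "j \<in> U" "k \<in> U" "ca \<in> U" "cb \<in> U" unfolding U_def E_def by auto
  have EU: "E i \<subseteq> U" "\<And>p. p \<in> S i \<Longrightarrow> E p \<subseteq> U" unfolding U_def by auto
  have SE: "S a \<subseteq> E a" for a unfolding E_def by auto
  have notS: "r \<notin> S i" if "r \<notin> U" for r using that EU SE by blast
  have notE: "r \<notin> E i" if "r \<notin> U" for r using that EU by blast
  have notEp: "r \<notin> E p" if "p \<in> S i" "r \<notin> U" for p r using that EU by blast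
  have Nz1: "nijenhuis Kf v a b c = 0" if "c \<notin> E a" for a b c
    using that unfolding NF GG_def E_def by (auto simp: supp)
  have Nz2: "nijenhuis Kf v a b c = 0" if "b \<notin> E a" for a b c
    using that unfolding NF GG_def E_def by (auto simp: supp)
  let ?N = "nijenhuis Kf v" and ?K = "Kf v"
  have H1: "zsum (\<lambda>p. zsum (\<lambda>r. ?N i p r * ?K p j * ?K r k)) = (\<Sum>p\<in>U. \<Sum>r\<in>U. ?N i p r * ?K p j * ?K r k)"
  proof -
    have "zsum (\<lambda>r. ?N i p r * ?K p j * ?K r k) = (\<Sum>r\<in>U. ?N i p r * ?K p j * ?K r k)" for p
      by (rule zsum_eq[OF finU]) (simp add: Nz1 notE notEp)
    then have "zsum (\<lambda>p. zsum (\<lambda>r. ?N i p r * ?K p j * ?K r k)) = zsum (\<lambda>p. \<Sum>r\<in>U. ?N i p r * ?K p j * ?K r k)"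
      by simp
    also have "\<dots> = (\<Sum>p\<in>U. \<Sum>r\<in>U. ?N i p r * ?K p j * ?K r k)"
      by (rule zsum_eq[OF finU]) (simp add: Nz2 notE notEp)
    finally show ?thesis .
  qed
  have H2: "zsum (\<lambda>p. zsum (\<lambda>r. ?N p j r * ?K i p * ?K r k)) = (\<Sum>p\<in>U. \<Sum>r\<in>U. ?N p j r * ?K i p * ?K r k)"
  proof -
    have "zsum (\<lambda>r. ?N p j r * ?K i p * ?K r k) = (\<Sum>r\<in>U. ?N p j r * ?K i p * ?K r k)" for p
    proof (cases "p \<in> S i")
      case True then show ?thesis by (intro zsum_eq[OF finU]) (simp add: Nz1 notE notEp)
    next
      case False then show ?thesis by (intro zsum_eq[OF finU]) (auto simp: supp)
    qed
    then have "zsum (\<lambda>p. zsum (\<lambda>r. ?N p j r * ?K i p * ?K r k)) = zsum (\<lambda>p. \<Sum>r\<in>U. ?N p j r * ?K i p * ?K r k)"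
      by simp
    also have "\<dots> = (\<Sum>p\<in>U. \<Sum>r\<in>U. ?N p j r * ?K i p * ?K r k)"
      by (rule zsum_eq[OF finU]) (simp add: supp notS)
    finally show ?thesis .
  qed
  have H3: "zsum (\<lambda>p. zsum (\<lambda>r. ?N p r k * ?K i p * ?K r j)) = (\<Sum>p\<in>U. \<Sum>r\<in>U. ?N p r k * ?K i p * ?K r j)"
  proof -
    have "zsum (\<lambda>r. ?N p r k * ?K i p * ?K r j) = (\<Sum>r\<in>U. ?N p r k * ?K i p * ?K r j)" for p
    proof (cases "p \<in> S i")
      case True then show ?thesis by (intro zsum_eq[OF finU]) (simp add: Nz2 notE notEp)
    next
      case False then show ?thesis by (intro zsum_eq[OF finU]) (auto simp: supp)
    qed
    then have "zsum (\<lambda>p. zsum (\<lambda>r. ?N p r k * ?K i p * ?K r j)) = zsum (\<lambda>p. \<Sum>r\<in>U. ?N p r k * ?K i p * ?K r j)"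
      by simp
    also have "\<dots> = (\<Sum>p\<in>U. \<Sum>r\<in>U. ?N p r k * ?K i p * ?K r j)"
      by (rule zsum_eq[OF finU]) (simp add: supp notS)
    finally show ?thesis .
  qed
  have H4: "zsum (\<lambda>p. zsum (\<lambda>r. ?N p j k * ?K i r * ?K r p)) = (\<Sum>p\<in>U. \<Sum>r\<in>U. ?N p j k * ?K i r * ?K r p)"
  proof -
    have "zsum (\<lambda>r. ?N p j k * ?K i r * ?K r p) = (\<Sum>r\<in>U. ?N p j k * ?K i r * ?K r p)" for p
      by (rule zsum_eq[OF finU]) (simp add: supp notS)
    then have "zsum (\<lambda>p. zsum (\<lambda>r. ?N p j k * ?K i r * ?K r p)) = zsum (\<lambda>p. \<Sum>r\<in>U. ?N p j k * ?K i r * ?K r p)"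
      by simp
    also have "\<dots> = (\<Sum>p\<in>U. \<Sum>r\<in>U. ?N p j k * ?K i r * ?K r p)"
    proof (rule zsum_eq[OF finU])
      fix p assume p: "p \<notin> U"
      show "(\<Sum>r\<in>U. ?N p j k * ?K i r * ?K r p) = 0"
      proof (rule sum.neutral, intro ballI)
        fix r assume "r \<in> U"
        show "?N p j k * ?K i r * ?K r p = 0"
        proof (cases "r \<in> S i")
          case True
          then have "p \<notin> S r" using EU(2)[OF True] SE p by blast
          then show ?thesis by (simp add: supp)
        next
          case False then show ?thesis by (simp add: supp)
        qed
      qed
    qed
    finally show ?thesis .
  qed
  show ?thesis
    unfolding haantjes_def H1 H2 H3 H4 unfolding NF
    by (rule Hsum[OF finU inU(4,5,1,2,3)])
qed

definition Sc :: "int \<Rightarrow> int \<Rightarrow> real" where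
  "Sc p j = chainA (\<lambda>l. if l = 0 then 1 else 0) p j"

lemma mult_if_real: "(a::real) * (if P then b else c) = (if P then a * b else a * c)"
  by simp

lemma A1: "j \<noteq> 0 \<Longrightarrow> j \<noteq> 1 \<Longrightarrow> chainA v p j = v 0 * Sc p j"
  unfolding Sc_def chainA_def by (simp split del: if_split cong: if_cong add: ring_distribs mult_if_real mult.commute[of "v 0"])

lemma A2: "j \<noteq> 0 \<Longrightarrow> j \<noteq> 1 \<Longrightarrow> dA v p j l = ee l 0 * Sc p j"
  unfolding Sc_def chainA_def dA_def by (simp split del: if_split cong: if_cong add: ring_distribs mult_if_real mult.commute[of "ee l 0"])

lemma A3: "j \<noteq> 0 \<Longrightarrow> j \<noteq> 1 \<Longrightarrow> chainA v 0 j = 0"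
  unfolding chainA_def by (simp split del: if_split cong: if_cong)

lemma zsum_zero: "zsum (\<lambda>p. 0) = 0"
  unfolding zsum_def by simp

lemma zsum_neg: "zsum (\<lambda>p. - f p) = - zsum f"
  unfolding zsum_def by (simp add: sum_negf)

lemma N_far: assumes "j \<noteq> 0" "j \<noteq> 1" "k \<noteq> 0" "k \<noteq> 1"
  shows "nijenhuis chainA v i j k = 0"
proof -
  have 1: "zsum (\<lambda>p. chainA v p j * pd p (\<lambda>w. chainA w i k) v) = 0"
    by (subst zsum_eq[where S="{0}"]) (auto simp: pd_chainA A2 A3 ee_def assms)
  have 2: "zsum (\<lambda>p. chainA v p k * pd p (\<lambda>w. chainA w i j) v) = 0"
    by (subst zsum_eq[where S="{0}"]) (auto simp: pd_chainA A2 A3 ee_def assms)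
  have 3: "zsum (\<lambda>p. chainA v i p * (pd j (\<lambda>w. chainA w p k) v - pd k (\<lambda>w. chainA w p j) v)) = 0"
    by (simp add: pd_chainA A2 ee_def assms zsum_zero)
  show ?thesis unfolding nijenhuis_def 1 2 3 by simp
qed

lemma N_antisym: "nijenhuis K v i j k = - nijenhuis K v i k j"
proof -
  have "(\<lambda>p. K v i p * (pd j (\<lambda>w. K w p k) v - pd k (\<lambda>w. K w p j) v))
      = (\<lambda>p. - (K v i p * (pd k (\<lambda>w. K w p j) v - pd j (\<lambda>w. K w p k) v)))"
    by (auto simp: algebra_simps)
  then show ?thesis unfolding nijenhuis_def by (simp add: zsum_neg)
qed

lemma Nlo_0: "i \<le> -7 \<Longrightarrow> nijenhuis chainA v i 0 k = GG (chainA v) 0 1 (v 1) (-4 * v 0) (v 0) i 0 k - GG (chainA v) 0 1 (v 1) (-4 * v 0) (v 0) i k 0"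
  unfolding N_expand
  apply (simp split del: if_split add: CC_def)
  apply (simp split del: if_split add: chainA_def dA_def ee_def GG_def)
  apply (simp split: if_split add: ee_def chainA_def algebra_simps power2_eq_square)
  done

lemma Nhi_0: "6 \<le> i \<Longrightarrow> nijenhuis chainA v i 0 k = GG (chainA v) 0 1 (v 1) (-4 * v 0) (v 0) i 0 k - GG (chainA v) 0 1 (v 1) (-4 * v 0) (v 0) i k 0"
  unfolding N_expand
  apply (simp split del: if_split add: CC_def)
  apply (simp split del: if_split add: chainA_def dA_def ee_def GG_def)
  apply (simp split: if_split add: ee_def chainA_def algebra_simps power2_eq_square)
  done

lemma Ncm6_0: "nijenhuis chainA v (-6) 0 k = GG (chainA v) 0 1 (v 1) (-4 * v 0) (v 0) (-6) 0 k - GG (chainA v) 0 1 (v 1) (-4 * v 0) (v 0) (-6) k 0"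
  unfolding N_expand
  apply (simp split del: if_split add: CC_def)
  apply (simp split del: if_split add: chainA_def dA_def ee_def GG_def)
  apply (simp split: if_split add: ee_def chainA_def algebra_simps power2_eq_square)
  done

lemma Ncm5_0: "nijenhuis chainA v (-5) 0 k = GG (chainA v) 0 1 (v 1) (-4 * v 0) (v 0) (-5) 0 k - GG (chainA v) 0 1 (v 1) (-4 * v 0) (v 0) (-5) k 0"
  unfolding N_expand
  apply (simp split del: if_split add: CC_def)
  apply (simp split del: if_split add: chainA_def dA_def ee_def GG_def)
  apply (simp split: if_split add: ee_def chainA_def algebra_simps power2_eq_square)
  done

lemma Ncm4_0: "nijenhuis chainA v (-4) 0 k = GG (chainA v) 0 1 (v 1) (-4 * v 0) (v 0) (-4) 0 k - GG (chainA v) 0 1 (v 1) (-4 * v 0) (v 0) (-4) k 0"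
  unfolding N_expand
  apply (simp split del: if_split add: CC_def)
  apply (simp split del: if_split add: chainA_def dA_def ee_def GG_def)
  apply (simp split: if_split add: ee_def chainA_def algebra_simps power2_eq_square)
  done

lemma Ncm3_0: "nijenhuis chainA v (-3) 0 k = GG (chainA v) 0 1 (v 1) (-4 * v 0) (v 0) (-3) 0 k - GG (chainA v) 0 1 (v 1) (-4 * v 0) (v 0) (-3) k 0"
  unfolding N_expand
  apply (simp split del: if_split add: CC_def)
  apply (simp split del: if_split add: chainA_def dA_def ee_def GG_def)
  apply (simp split: if_split add: ee_def chainA_def algebra_simps power2_eq_square)
  done

lemma Ncm2_0: "nijenhuis chainA v (-2) 0 k = GG (chainA v) 0 1 (v 1) (-4 * v 0) (v 0) (-2) 0 k - GG (chainA v) 0 1 (v 1) (-4 * v 0) (v 0) (-2) k 0"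
  unfolding N_expand
  apply (simp split del: if_split add: CC_def)
  apply (simp split del: if_split add: chainA_def dA_def ee_def GG_def)
  apply (simp split: if_split add: ee_def chainA_def algebra_simps power2_eq_square)
  done

lemma Ncm1_0: "nijenhuis chainA v (-1) 0 k = GG (chainA v) 0 1 (v 1) (-4 * v 0) (v 0) (-1) 0 k - GG (chainA v) 0 1 (v 1) (-4 * v 0) (v 0) (-1) k 0"
  unfolding N_expand
  apply (simp split del: if_split add: CC_def)
  apply (simp split del: if_split add: chainA_def dA_def ee_def GG_def)
  apply (simp split: if_split add: ee_def chainA_def algebra_simps power2_eq_square)
  done

lemma Nc0_0: "nijenhuis chainA v 0 0 k = GG (chainA v) 0 1 (v 1) (-4 * v 0) (v 0) 0 0 k - GG (chainA v) 0 1 (v 1) (-4 * v 0) (v 0) 0 k 0"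
  unfolding N_expand
  apply (simp split del: if_split add: CC_def)
  apply (simp split del: if_split add: chainA_def dA_def ee_def GG_def)
  apply (simp split: if_split add: ee_def chainA_def algebra_simps power2_eq_square)
  done

lemma Nc1_0: "nijenhuis chainA v 1 0 k = GG (chainA v) 0 1 (v 1) (-4 * v 0) (v 0) 1 0 k - GG (chainA v) 0 1 (v 1) (-4 * v 0) (v 0) 1 k 0"
  unfolding N_expand
  apply (simp split del: if_split add: CC_def)
  apply (simp split del: if_split add: chainA_def dA_def ee_def GG_def)
  apply (simp split: if_split add: ee_def chainA_def algebra_simps power2_eq_square)
  done

lemma Nc2_0: "nijenhuis chainA v 2 0 k = GG (chainA v) 0 1 (v 1) (-4 * v 0) (v 0) 2 0 k - GG (chainA v) 0 1 (v 1) (-4 * v 0) (v 0) 2 k 0"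
  unfolding N_expand
  apply (simp split del: if_split add: CC_def)
  apply (simp split del: if_split add: chainA_def dA_def ee_def GG_def)
  apply (simp split: if_split add: ee_def chainA_def algebra_simps power2_eq_square)
  done

lemma Nc3_0: "nijenhuis chainA v 3 0 k = GG (chainA v) 0 1 (v 1) (-4 * v 0) (v 0) 3 0 k - GG (chainA v) 0 1 (v 1) (-4 * v 0) (v 0) 3 k 0"
  unfolding N_expand
  apply (simp split del: if_split add: CC_def)
  apply (simp split del: if_split add: chainA_def dA_def ee_def GG_def)
  apply (simp split: if_split add: ee_def chainA_def algebra_simps power2_eq_square)
  done

lemma Nc4_0: "nijenhuis chainA v 4 0 k = GG (chainA v) 0 1 (v 1) (-4 * v 0) (v 0) 4 0 k - GG (chainA v) 0 1 (v 1) (-4 * v 0) (v 0) 4 k 0"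
  unfolding N_expand
  apply (simp split del: if_split add: CC_def)
  apply (simp split del: if_split add: chainA_def dA_def ee_def GG_def)
  apply (simp split: if_split add: ee_def chainA_def algebra_simps power2_eq_square)
  done

lemma Nc5_0: "nijenhuis chainA v 5 0 k = GG (chainA v) 0 1 (v 1) (-4 * v 0) (v 0) 5 0 k - GG (chainA v) 0 1 (v 1) (-4 * v 0) (v 0) 5 k 0"
  unfolding N_expand
  apply (simp split del: if_split add: CC_def)
  apply (simp split del: if_split add: chainA_def dA_def ee_def GG_def)
  apply (simp split: if_split add: ee_def chainA_def algebra_simps power2_eq_square)
  done

lemma Nlo_1: "i \<le> -7 \<Longrightarrow> nijenhuis chainA v i 1 k = GG (chainA v) 0 1 (v 1) (-4 * v 0) (v 0) i 1 k - GG (chainA v) 0 1 (v 1) (-4 * v 0) (v 0) i k 1"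
  unfolding N_expand
  apply (simp split del: if_split add: CC_def)
  apply (simp split del: if_split add: chainA_def dA_def ee_def GG_def)
  apply (simp split: if_split add: ee_def chainA_def algebra_simps power2_eq_square)
  done

lemma Nhi_1: "6 \<le> i \<Longrightarrow> nijenhuis chainA v i 1 k = GG (chainA v) 0 1 (v 1) (-4 * v 0) (v 0) i 1 k - GG (chainA v) 0 1 (v 1) (-4 * v 0) (v 0) i k 1"
  unfolding N_expand
  apply (simp split del: if_split add: CC_def)
  apply (simp split del: if_split add: chainA_def dA_def ee_def GG_def)
  apply (simp split: if_split add: ee_def chainA_def algebra_simps power2_eq_square)
  done

lemma Ncm6_1: "nijenhuis chainA v (-6) 1 k = GG (chainA v) 0 1 (v 1) (-4 * v 0) (v 0) (-6) 1 k - GG (chainA v) 0 1 (v 1) (-4 * v 0) (v 0) (-6) k 1"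
  unfolding N_expand
  apply (simp split del: if_split add: CC_def)
  apply (simp split del: if_split add: chainA_def dA_def ee_def GG_def)
  apply (simp split: if_split add: ee_def chainA_def algebra_simps power2_eq_square)
  done

lemma Ncm5_1: "nijenhuis chainA v (-5) 1 k = GG (chainA v) 0 1 (v 1) (-4 * v 0) (v 0) (-5) 1 k - GG (chainA v) 0 1 (v 1) (-4 * v 0) (v 0) (-5) k 1"
  unfolding N_expand
  apply (simp split del: if_split add: CC_def)
  apply (simp split del: if_split add: chainA_def dA_def ee_def GG_def)
  apply (simp split: if_split add: ee_def chainA_def algebra_simps power2_eq_square)
  done

lemma Ncm4_1: "nijenhuis chainA v (-4) 1 k = GG (chainA v) 0 1 (v 1) (-4 * v 0) (v 0) (-4) 1 k - GG (chainA v) 0 1 (v 1) (-4 * v 0) (v 0) (-4) k 1"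
  unfolding N_expand
  apply (simp split del: if_split add: CC_def)
  apply (simp split del: if_split add: chainA_def dA_def ee_def GG_def)
  apply (simp split: if_split add: ee_def chainA_def algebra_simps power2_eq_square)
  done

lemma Ncm3_1: "nijenhuis chainA v (-3) 1 k = GG (chainA v) 0 1 (v 1) (-4 * v 0) (v 0) (-3) 1 k - GG (chainA v) 0 1 (v 1) (-4 * v 0) (v 0) (-3) k 1"
  unfolding N_expand
  apply (simp split del: if_split add: CC_def)
  apply (simp split del: if_split add: chainA_def dA_def ee_def GG_def)
  apply (simp split: if_split add: ee_def chainA_def algebra_simps power2_eq_square)
  done

lemma Ncm2_1: "nijenhuis chainA v (-2) 1 k = GG (chainA v) 0 1 (v 1) (-4 * v 0) (v 0) (-2) 1 k - GG (chainA v) 0 1 (v 1) (-4 * v 0) (v 0) (-2) k 1"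
  unfolding N_expand
  apply (simp split del: if_split add: CC_def)
  apply (simp split del: if_split add: chainA_def dA_def ee_def GG_def)
  apply (simp split: if_split add: ee_def chainA_def algebra_simps power2_eq_square)
  done

lemma Ncm1_1: "nijenhuis chainA v (-1) 1 k = GG (chainA v) 0 1 (v 1) (-4 * v 0) (v 0) (-1) 1 k - GG (chainA v) 0 1 (v 1) (-4 * v 0) (v 0) (-1) k 1"
  unfolding N_expand
  apply (simp split del: if_split add: CC_def)
  apply (simp split del: if_split add: chainA_def dA_def ee_def GG_def)
  apply (simp split: if_split add: ee_def chainA_def algebra_simps power2_eq_square)
  done

lemma Nc0_1: "nijenhuis chainA v 0 1 k = GG (chainA v) 0 1 (v 1) (-4 * v 0) (v 0) 0 1 k - GG (chainA v) 0 1 (v 1) (-4 * v 0) (v 0) 0 k 1"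
  unfolding N_expand
  apply (simp split del: if_split add: CC_def)
  apply (simp split del: if_split add: chainA_def dA_def ee_def GG_def)
  apply (simp split: if_split add: ee_def chainA_def algebra_simps power2_eq_square)
  done

lemma Nc1_1: "nijenhuis chainA v 1 1 k = GG (chainA v) 0 1 (v 1) (-4 * v 0) (v 0) 1 1 k - GG (chainA v) 0 1 (v 1) (-4 * v 0) (v 0) 1 k 1"
  unfolding N_expand
  apply (simp split del: if_split add: CC_def)
  apply (simp split del: if_split add: chainA_def dA_def ee_def GG_def)
  apply (simp split: if_split add: ee_def chainA_def algebra_simps power2_eq_square)
  done

lemma Nc2_1: "nijenhuis chainA v 2 1 k = GG (chainA v) 0 1 (v 1) (-4 * v 0) (v 0) 2 1 k - GG (chainA v) 0 1 (v 1) (-4 * v 0) (v 0) 2 k 1"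
  unfolding N_expand
  apply (simp split del: if_split add: CC_def)
  apply (simp split del: if_split add: chainA_def dA_def ee_def GG_def)
  apply (simp split: if_split add: ee_def chainA_def algebra_simps power2_eq_square)
  done

lemma Nc3_1: "nijenhuis chainA v 3 1 k = GG (chainA v) 0 1 (v 1) (-4 * v 0) (v 0) 3 1 k - GG (chainA v) 0 1 (v 1) (-4 * v 0) (v 0) 3 k 1"
  unfolding N_expand
  apply (simp split del: if_split add: CC_def)
  apply (simp split del: if_split add: chainA_def dA_def ee_def GG_def)
  apply (simp split: if_split add: ee_def chainA_def algebra_simps power2_eq_square)
  done

lemma Nc4_1: "nijenhuis chainA v 4 1 k = GG (chainA v) 0 1 (v 1) (-4 * v 0) (v 0) 4 1 k - GG (chainA v) 0 1 (v 1) (-4 * v 0) (v 0) 4 k 1"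
  unfolding N_expand
  apply (simp split del: if_split add: CC_def)
  apply (simp split del: if_split add: chainA_def dA_def ee_def GG_def)
  apply (simp split: if_split add: ee_def chainA_def algebra_simps power2_eq_square)
  done

lemma Nc5_1: "nijenhuis chainA v 5 1 k = GG (chainA v) 0 1 (v 1) (-4 * v 0) (v 0) 5 1 k - GG (chainA v) 0 1 (v 1) (-4 * v 0) (v 0) 5 k 1"
  unfolding N_expand
  apply (simp split del: if_split add: CC_def)
  apply (simp split del: if_split add: chainA_def dA_def ee_def GG_def)
  apply (simp split: if_split add: ee_def chainA_def algebra_simps power2_eq_square)
  done

lemma N01: assumes "b = 0 \<or> b = 1"
  shows "nijenhuis chainA v a b c = GG (chainA v) 0 1 (v 1) (-4 * v 0) (v 0) a b c - GG (chainA v) 0 1 (v 1) (-4 * v 0) (v 0) a c b"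
proof -
  have "a \<le> -7 \<or> 6 \<le> a \<or> a = -6 \<or> a = -5 \<or> a = -4 \<or> a = -3 \<or> a = -2 \<or> a = -1 \<or> a = 0 \<or> a = 1 \<or> a = 2 \<or> a = 3 \<or> a = 4 \<or> a = 5" by presburger
  then show ?thesis using assms
    by (elim disjE) (simp_all add: Nlo_0 Nhi_0 Ncm6_0 Ncm5_0 Ncm4_0 Ncm3_0 Ncm2_0 Ncm1_0 Nc0_0 Nc1_0 Nc2_0 Nc3_0 Nc4_0 Nc5_0 Nlo_1 Nhi_1 Ncm6_1 Ncm5_1 Ncm4_1 Ncm3_1 Ncm2_1 Ncm1_1 Nc0_1 Nc1_1 Nc2_1 Nc3_1 Nc4_1 Nc5_1)
qed

lemma NF_chain: "nijenhuis chainA v a b c = GG (chainA v) 0 1 (v 1) (-4 * v 0) (v 0) a b c - GG (chainA v) 0 1 (v 1) (-4 * v 0) (v 0) a c b"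
proof (cases "b = 0 \<or> b = 1")
  case True then show ?thesis by (rule N01)
next
  case False
  show ?thesis
  proof (cases "c = 0 \<or> c = 1")
    case True
    then show ?thesis using N_antisym[of chainA v a b c] N01[of c v a b] by simp
  next
    case False2: False
    then show ?thesis using False N_far[of b c v a] by (simp add: GG_def)
  qed
qed

theorem proposition4p3:
  shows "\<forall>u i j k. haantjes chainA u i j k = 0"
proof (intro allI)
  fix u i j k
  show "haantjes chainA u i j k = 0"
  proof (rule haantjes_abstract[where S="\<lambda>a. CC \<union> {a-1,a,a+1}" and ca=0 and cb=1
      and x="u 1" and y="-4 * u 0" and z="u 0"])
    show "finite (CC \<union> {a-1,a,a+1})" for a by (simp add: CC_def)
    show "chainA u a c = 0" if "c \<notin> CC \<union> {a-1,a,a+1}" for a c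
      using that chainA_zero by blast
    show "nijenhuis chainA u a b c = GG (chainA u) 0 1 (u 1) (-4 * u 0) (u 0) a b c - GG (chainA u) 0 1 (u 1) (-4 * u 0) (u 0) a c b" for a b c
      by (rule NF_chain)
  qed
qed

end
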